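(* Under Strategy 2B (described in the context), consider an attack cycle equal to H in the stationary sequence of i.i.d. attack cycles, and let $U'(H)$ be the number of uncles referred by its (honest) block. Then $$\mathbb{P}[U'(H)=1]=\sum_{i=2}^{n_1-2}\bigl(1-pq^2-pq^2C_{n_1-2-i}(pq)\bigr)\pi_i+\pi_{n_1-1}+\pi_{n_1},$$ $$\mathbb{P}[U'(H)=2]=\sum_{i+j\le n_1}\pi_i\pi_j,\qquad \mathbb{P}[U'(H)\ge3]=0.$$
   Context: Honest hashrate $p$, attacker hashrate $q$, $p+q=1$, $0<q<p$; $\gamma\in[0,1]$ is the fraction of honest hashrate mining on the attacker's block during a public competition between equal-height blocks. Attack cycles form an i.i.d. sequence of words in S (attacker block) and H (honest block): H, SHS, SHH, or SSwH with $w$ a Dyck word; $\mathbb{P}[H]=p$, $\mathbb{P}[SHS]=pq^2$, $\mathbb{P}[SHH]=p^2q$, $\mathbb{P}[SSwH]=q^2p(pq)^{|w|}$ ($|w|$ half the length of $w$). $L(\omega)$ is the number of blocks added to the official chain during $\omega$ ($L(H)=1$, $L(SHS)=L(SHH)=2$, $L(SSwH)=|w|+2$); $\omega$ is won by the attacker if $\omega=SHS$ or $\omega$ starts with SS. Ethereum rules: an uncle is a non-official block whose parent is official; a nephew (official block) may refer an uncle at distance (height difference) at most $n_1$ ($n_1\ge 2$ an integer), and refers at most two uncles. Strategy 2B: the attacker keeps his whole fork secret and releases it all at once at the end of the attack cycle, when an honest block would reduce his advance to one block (after a single attacker block, he publishes it to compete); the attacker's fork wins in cycles starting with SS; the attacker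 refers no uncles, while honest blocks refer all available uncles. $C_n$ is the $n$-th Catalan number, $C_n(x)=\sum_{k=0}^nC_kx^k$; $\pi_0=\pi_1=0$ and $\pi_k=pq^2\bigl(\mathbf 1_{k=2}+(pq)^{k-2}C_{k-2}\bigr)$ for $k\ge2$. *)

theory Defs
  imports "HOL-Probability.Probability"
begin

text \<open>Blocks of an attack cycle: S = attacker block, H = honest block.\<close>
datatype letter = S | H

inductive dyck :: "letter list \<Rightarrow> bool" where
  dyck_Nil: "dyck []"
| dyck_step: "dyck u \<Longrightarrow> dyck v \<Longrightarrow> dyck (S # u @ H # v)"

text \<open>Probability of an attack cycle (a word); 0 for words that are not attack cycles.
  For SSwH, the half-length of w is (length w - 3) div 2.\<close>
definition cycle_prob :: "real \<Rightarrow> real \<Rightarrow> letter list \<Rightarrow> real" where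
  "cycle_prob p q w =
     (if w = [H] then p
      else if w = [S,H,S] then p * q^2
      else if w = [S,H,H] then p^2 * q
      else if (\<exists>v. dyck v \<and> w = S # S # v @ [H])
           then q^2 * p * (p*q) ^ ((length w - 3) div 2)
      else 0)"

text \<open>Number of blocks added to the official chain during a cycle.\<close>
definition cycle_len :: "letter list \<Rightarrow> nat" where
  "cycle_len w = (if w = [H] then 1
                  else if w = [S,H,S] \<or> w = [S,H,H] then 2
                  else (length w - 3) div 2 + 2)"

definition attacker_won :: "letter list \<Rightarrow> bool" where
  "attacker_won w \<longleftrightarrow> w = [S,H,S] \<or> take 2 w = [S,S]"

text \<open>State: list of distances (height difference to the next block mined on top of
  the official chain) of the uncles still waiting to be referred.
  An attacker-won cycle creates one uncle (the first honest block of the cycle, whose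
  parent is the official tip at the cycle start), at distance L from the next block;
  older pending uncles move L further away.  In an honest-won cycle the first official
  honest block refers the available uncles (at most two) and none remain pending; the attacker's block in SHH is referred inside the cycle.\<close>
definition uncle_step :: "letter list \<Rightarrow> nat list \<Rightarrow> nat list" where
  "uncle_step w st = (if attacker_won w then cycle_len w # map (\<lambda>d. d + cycle_len w) st else [])"

definition refs :: "nat \<Rightarrow> nat list \<Rightarrow> nat" where
  "refs n1 st = min 2 (length (filter (\<lambda>d. d \<le> n1) st))"

text \<open>U'(H) for the cycle at index 0: only the previous n1 cycles can contribute uncles
  within distance n1 (each cycle adds at least one block).\<close>
definition U' :: "nat \<Rightarrow> (int \<Rightarrow> 'm \<Rightarrow> letter list) \<Rightarrow> 'm \<Rightarrow> nat" where
  "U' n1 X x = refs n1 (foldl (\<lambda>st i. uncle_step (X i x) st) [] [- int n1 .. -1])"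

definition catalan :: "nat \<Rightarrow> nat" where
  "catalan n = (2*n choose n) div (n+1)"

definition catalan_poly :: "nat \<Rightarrow> real \<Rightarrow> real" where
  "catalan_poly n x = (\<Sum>k\<le>n. real (catalan k) * x^k)"

definition pi_unc :: "real \<Rightarrow> real \<Rightarrow> nat \<Rightarrow> real" where
  "pi_unc p q k = (if k < 2 then 0
     else p * q^2 * ((if k = 2 then 1 else 0) + (p*q)^(k-2) * real (catalan (k-2))))"

end

theory Submission
  imports Defs
begin

fun okw :: "nat \<Rightarrow> letter list \<Rightarrow> bool" where
  "okw h [] = (h = 0)"
| "okw h (S # w) = okw (Suc h) w"
| "okw h (H # w) = (0 < h \<and> okw (h - 1) w)"

lemma dyck_okw_app: "dyck u \<Longrightarrow> okw h (u @ w) = okw h w"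
  by (induction u arbitrary: h w rule: dyck.induct) auto

lemma dyck_okw: "dyck u \<Longrightarrow> okw 0 u"
  using dyck_okw_app[of u 0 "[]"] by simp

lemma okw_dyck_aux:
  "(okw h v \<longrightarrow> h = 0 \<longrightarrow> dyck v) \<and>
   (okw h v \<longrightarrow> 0 < h \<longrightarrow> (\<exists>u w. dyck u \<and> v = u @ H # w \<and> okw (h - 1) w))"
proof (induction "length v" arbitrary: v h rule: less_induct)
  case less
  show ?case
  proof (cases v)
    case Nil
    then show ?thesis by (auto intro: dyck.intros)
  next
    case (Cons a w)
    show ?thesis
    proof (cases a)
      case H
      then show ?thesis using Cons by (auto intro: dyck.intros)
    next
      case S
      show ?thesis
      proof (intro conjI impI)
        assume ok: "okw h v" and h0: "h = 0"
        then have "okw (Suc h) w" using Cons S by simp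
        then obtain u w' where u: "dyck u" "w = u @ H # w'" "okw h w'"
          using less[of w "Suc h"] Cons by auto
        then have "dyck w'" using less[of w' h] Cons h0 by auto
        then show "dyck v" using Cons S u by (auto intro: dyck.intros)
      next
        assume ok: "okw h v" and h0: "0 < h"
        then have "okw (Suc h) w" using Cons S by simp
        then obtain u w' where u: "dyck u" "w = u @ H # w'" "okw h w'"
          using less[of w "Suc h"] Cons by auto
        then obtain u' w'' where u': "dyck u'" "w' = u' @ H # w''" "okw (h - 1) w''"
          using less[of w' h] Cons h0 by auto
        have "dyck (S # u @ H # u')" using u u' by (auto intro: dyck.intros)
        then show "\<exists>u w. dyck u \<and> v = u @ H # w \<and> okw (h - 1) w"
          using Cons S u u' by (intro exI[of _ "S # u @ H # u'"] exI[of _ w'']) auto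
      qed
    qed
  qed
qed

lemma dyck_iff_okw: "dyck v \<longleftrightarrow> okw 0 v"
  using dyck_okw okw_dyck_aux by blast

lemma dyck_even: "dyck v \<Longrightarrow> even (length v)"
  by (induction rule: dyck.induct) auto

lemma UNIV_letter: "(UNIV :: letter set) = {S, H}"
  using letter.exhaust by auto

lemma finite_letter: "finite (UNIV :: letter set)"
  by (simp add: UNIV_letter)

lemma finite_len: "finite {w :: letter list. length w = n}"
  using finite_lists_length_eq[OF finite_letter, of n] by simp

lemma finite_len_le: "finite {w :: letter list. length w \<le> n}"
  using finite_lists_length_le[OF finite_letter, of n] by simp

definition cnt :: "nat \<Rightarrow> nat \<Rightarrow> nat" where
  "cnt n h = card {w. length w = n \<and> okw h w}"

lemma cnt_0: "cnt 0 h = (if h = 0 then 1 else 0)"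
proof -
  have "{w. length w = 0 \<and> okw h w} = (if h = 0 then {[]} else {})" by auto
  then show ?thesis unfolding cnt_def by simp
qed

lemma cnt_Suc: "cnt (Suc n) h = cnt n (Suc h) + (if 0 < h then cnt n (h - 1) else 0)"
proof -
  have eq: "{w. length w = Suc n \<and> okw h w} =
      (\<lambda>w. S # w) ` {w. length w = n \<and> okw (Suc h) w} \<union>
      (\<lambda>w. H # w) ` {w. length w = n \<and> 0 < h \<and> okw (h - 1) w}"
  proof (rule set_eqI)
    fix x show "x \<in> {w. length w = Suc n \<and> okw h w} \<longleftrightarrow> x \<in> (\<lambda>w. S # w) ` {w. length w = n \<and> okw (Suc h) w} \<union>
      (\<lambda>w. H # w) ` {w. length w = n \<and> 0 < h \<and> okw (h - 1) w}"
    proof (cases x)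
      case (Cons a y) then show ?thesis by (cases a) auto
    qed auto
  qed
  have f1: "finite {w. length w = n \<and> okw (Suc h) w}"
    by (rule finite_subset[OF _ finite_len[of n]]) auto
  have f2: "finite {w. length w = n \<and> 0 < h \<and> okw (h - 1) w}"
    by (rule finite_subset[OF _ finite_len[of n]]) auto
  have "cnt (Suc n) h = card ((\<lambda>w. S # w) ` {w. length w = n \<and> okw (Suc h) w}) +
      card ((\<lambda>w. H # w) ` {w. length w = n \<and> 0 < h \<and> okw (h - 1) w})"
    unfolding cnt_def eq by (rule card_Un_disjoint) (use f1 f2 in auto)
  also have "\<dots> = cnt n (Suc h) + card {w. length w = n \<and> 0 < h \<and> okw (h - 1) w}"
    unfolding cnt_def by (subst card_image; simp add: inj_on_def)+
  finally show ?thesis unfolding cnt_def by auto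
qed

definition bb :: "nat \<Rightarrow> int \<Rightarrow> int" where
  "bb n k = (if k < 0 then 0 else int (n choose nat k))"

lemma bb_Suc: "bb (Suc n) k = bb n k + bb n (k - 1)"
proof (cases "k \<le> 0")
  case True
  then show ?thesis unfolding bb_def by (cases "k = 0") auto
next
  case False
  then have "nat k = Suc (nat (k - 1))" by auto
  then show ?thesis using False unfolding bb_def by simp
qed

definition FF :: "nat \<Rightarrow> nat \<Rightarrow> int" where
  "FF n h = (if even (n + h) then bb n ((int n - int h) div 2) - bb n ((int n - int h) div 2 - 1) else 0)"

lemma cnt_FF: "int (cnt n h) = FF n h"
proof (induction n arbitrary: h)
  case 0
  show ?case
  proof (cases "h = 0")
    case True then show ?thesis by (simp add: cnt_0 FF_def bb_def)
  next
    case False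
    have "(- int h) div 2 < 0" using False by linarith
    then show ?thesis using False by (auto simp add: cnt_0 FF_def bb_def)
  qed
next
  case (Suc n)
  define u where "u = (int n + 1 - int h) div 2"
  show ?case
  proof (cases "even (Suc n + h)")
    case False
    then show ?thesis using Suc by (cases h) (auto simp: cnt_Suc FF_def)
  next
    case ev: True
    have u2: "int n + 1 - int h = 2 * u" using ev unfolding u_def
      by (metis add.commute dvd_mult_div_cancel even_of_nat_iff int_ops(4) minus_add_distrib  add_diff_eq even_diff of_nat_add)
    have d: "(int n - int (Suc h)) div 2 = u - 1"
    proof -
      have "int n - int (Suc h) = 2 * (u - 1)" using u2 by simp
      then show ?thesis by simp
    qed
    have A0: "FF n (Suc h) = bb n ((int n - int (Suc h)) div 2) - bb n ((int n - int (Suc h)) div 2 - 1)"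
      using ev unfolding FF_def by simp
    have A: "FF n (Suc h) = bb n (u - 1) - bb n (u - 2)"
      unfolding A0 d by (simp add: algebra_simps)
    have B: "FF (Suc n) h = bb n u - bb n (u - 2)"
      unfolding FF_def using ev u2 by (simp add: bb_Suc algebra_simps)
    show ?thesis
    proof (cases "0 < h")
      case True
      have C: "FF n (h - 1) = bb n u - bb n (u - 1)"
        unfolding FF_def using ev u2 True by (auto simp: algebra_simps of_nat_diff)
      show ?thesis using True Suc A B C by (simp add: cnt_Suc)
    next
      case False
      then have h0: "h = 0" by simp
      have n: "n = nat (2 * u - 1)" "u \<ge> 1" using u2 h0 by auto
      have "bb n u = bb n (u - 1)"
      proof -
        have "n choose nat u = n choose (n - nat u)" using n by (intro binomial_symmetric) auto
        moreover have "n - nat u = nat (u - 1)" using n by auto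
        ultimately show ?thesis unfolding bb_def using n by auto
      qed
      then show ?thesis using h0 Suc A B by (simp add: cnt_Suc)
    qed
  qed
qed

lemma binom_id: "(Suc (Suc m)) * (2 * Suc m choose m) = Suc m * (2 * Suc m choose Suc m)"
  by (metis Suc_times_binomial_add add_Suc mult_2)

lemma card_dyck: "card {v. dyck v \<and> length v = 2 * m} = catalan m"
proof -
  have "{v. dyck v \<and> length v = 2 * m} = {w. length w = 2 * m \<and> okw 0 w}"
    using dyck_iff_okw by auto
  then have c: "int (card {v. dyck v \<and> length v = 2 * m}) = FF (2 * m) 0"
    using cnt_FF[of "2 * m" 0] unfolding cnt_def by simp
  show ?thesis
  proof (cases m)
    case 0
    then show ?thesis using c by (simp add: FF_def bb_def catalan_def)
  next
    case (Suc k)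
    define C where "C = 2 * m choose m"
    define C' where "C' = 2 * m choose k"
    have id: "Suc (Suc k) * C' = Suc k * C" unfolding C_def C'_def Suc by (rule binom_id)
    have "Suc k * C' \<le> Suc (Suc k) * C'" by simp
    then have "Suc k * C' \<le> Suc k * C" using id by simp
    then have le: "C' \<le> C" using mult_le_cancel1[of "Suc k" C' C] by linarith
    have e: "(int (2*m) - int 0) div 2 = int m" by simp
    have e2: "int m - 1 = int k" using Suc by simp
    have "FF (2 * m) 0 = bb (2*m) (int m) - bb (2*m) (int m - 1)" unfolding FF_def e by simp
    also have "\<dots> = int C - int C'" unfolding e2 bb_def C_def C'_def by simp
    finally have FFv: "FF (2 * m) 0 = int C - int C'" .
    have "Suc (Suc k) * (C - C') = C"
      using id le by (simp add: diff_mult_distrib2 algebra_simps)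
    then have "C div Suc (Suc k) = C - C'" by (metis nonzero_mult_div_cancel_left Zero_not_Suc)
    then have "catalan m = C - C'" unfolding catalan_def C_def Suc by simp
    then show ?thesis using c FFv le by simp
  qed
qed



lemma won_cases: "attacker_won b \<Longrightarrow> b = [S,H,S] \<or> (\<exists>r. b = S # S # r)"
  unfolding attacker_won_def
  by (cases b; simp; rename_tac a r; case_tac r; auto)

lemma len_SS: "cycle_len (S # S # r) = (length r + 2 - 3) div 2 + 2"
  unfolding cycle_len_def by auto

lemma won_len_bound: "attacker_won b \<Longrightarrow> length b \<le> 2 * cycle_len b + 3"
  using won_cases[of b] by (auto simp: len_SS cycle_len_def)

lemma won_len_ge2: "attacker_won b \<Longrightarrow> 2 \<le> cycle_len b"
  using won_cases[of b] by (auto simp: len_SS cycle_len_def)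

lemma finite_won_le: "finite {b. attacker_won b \<and> cycle_len b \<le> n}"
  by (rule finite_subset[OF _ finite_len_le[of "2 * n + 3"]]) (auto dest: won_len_bound)

lemma finite_W: "finite {b. attacker_won b \<and> cycle_len b = i}"
  by (rule finite_subset[OF _ finite_won_le[of i]]) auto

lemma cp_SS: "dyck v \<Longrightarrow> cycle_prob p q (S # S # v @ [H]) = q^2 * p * (p*q) ^ (length v div 2)"
  unfolding cycle_prob_def by auto

lemma cp_support: "cycle_prob p q b \<noteq> 0 \<Longrightarrow>
   b = [H] \<or> b = [S,H,S] \<or> b = [S,H,H] \<or> (\<exists>v. dyck v \<and> b = S # S # v @ [H])"
  unfolding cycle_prob_def by (auto split: if_splits)

lemma sum_W: "(\<Sum>b\<in>{b. attacker_won b \<and> cycle_len b = i}. cycle_prob p q b) = pi_unc p q i"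
proof -
  define D where "D = {v. dyck v \<and> length v = 2 * (i - 2)}"
  define T where "T = (if 2 \<le> i then (\<lambda>v. S # S # v @ [H]) ` D else {})"
  define K where "K = (if i = 2 then {[S,H,S]} else {}) \<union> T"
  have finD: "finite D" unfolding D_def
    by (rule finite_subset[OF _ finite_len[of "2 * (i - 2)"]]) auto
  have KW: "K \<subseteq> {b. attacker_won b \<and> cycle_len b = i}"
  proof
    fix b assume "b \<in> K"
    then consider "i = 2" "b = [S,H,S]" | v where "2 \<le> i" "v \<in> D" "b = S # S # v @ [H]"
      unfolding K_def T_def by (auto split: if_splits)
    then show "b \<in> {b. attacker_won b \<and> cycle_len b = i}"
    proof cases
      case 1 then show ?thesis by (simp add: attacker_won_def cycle_len_def)
    next
      case 2 then show ?thesis unfolding D_def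
        by (simp add: attacker_won_def len_SS del: cycle_len_def)
    qed
  qed
  have zero: "\<forall>b\<in>{b. attacker_won b \<and> cycle_len b = i} - K. cycle_prob p q b = 0"
  proof (intro ballI, rule ccontr)
    fix b assume b: "b \<in> {b. attacker_won b \<and> cycle_len b = i} - K" and nz: "cycle_prob p q b \<noteq> 0"
    from cp_support[OF nz] b show False
    proof (elim disjE exE conjE)
      fix v assume v: "dyck v" "b = S # S # v @ [H]"
      have "even (length v)" using dyck_even[OF v(1)] .
      then have "length v = 2 * (i - 2)" "2 \<le> i" using b v by (auto simp: len_SS)
      then have "b \<in> K" using v unfolding K_def T_def D_def by auto
      then show False using b by auto
    qed (auto simp: attacker_won_def cycle_len_def K_def)
  qed
  have "(\<Sum>b\<in>{b. attacker_won b \<and> cycle_len b = i}. cycle_prob p q b) = (\<Sum>b\<in>K. cycle_prob p q b)"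
    by (rule sum.mono_neutral_right[OF finite_W KW zero])
  also have "\<dots> = (if i = 2 then p * q^2 else 0) + (\<Sum>b\<in>T. cycle_prob p q b)"
  proof -
    have "finite T" unfolding T_def using finD by auto
    moreover have "[S,H,S] \<notin> T" unfolding T_def by auto
    ultimately show ?thesis unfolding K_def by (auto simp: cycle_prob_def)
  qed
  also have "(\<Sum>b\<in>T. cycle_prob p q b) = (if 2 \<le> i then real (catalan (i - 2)) * (q^2 * p * (p*q) ^ (i - 2)) else 0)"
  proof (cases "2 \<le> i")
    case True
    have "(\<Sum>b\<in>T. cycle_prob p q b) = (\<Sum>v\<in>D. cycle_prob p q (S # S # v @ [H]))"
      unfolding T_def using True by (simp add: sum.reindex inj_on_def)
    also have "\<dots> = (\<Sum>v\<in>D. q^2 * p * (p*q) ^ (i - 2))"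
      by (rule sum.cong) (auto simp: D_def cp_SS)
    also have "\<dots> = real (card D) * (q^2 * p * (p*q) ^ (i - 2))" by simp
    finally show ?thesis using True card_dyck[of "i - 2"] unfolding D_def by simp
  qed (simp add: T_def)
  finally show ?thesis unfolding pi_unc_def by (auto simp: algebra_simps)
qed


definition gg :: "nat \<Rightarrow> letter list \<Rightarrow> letter list \<Rightarrow> nat" where
  "gg n1 a b = (if attacker_won b \<and> attacker_won a \<and> cycle_len a + cycle_len b \<le> n1 then 2
     else if attacker_won b \<and> cycle_len b \<le> n1 then 1 else 0)"

lemma refs_two: "refs n1 (uncle_step b (uncle_step a st)) = gg n1 a b"
proof -
  have f: "filter (\<lambda>d. d \<le> n1) (map (\<lambda>d. d + c) st) = []" if "n1 < c" for c
    using that by (induction st) auto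
  show ?thesis
    unfolding refs_def uncle_step_def gg_def
    using f[of "cycle_len a + cycle_len b"]
    by (auto simp: comp_def add.assoc)
qed

lemma U'_eq: "2 \<le> n1 \<Longrightarrow> U' n1 X x = gg n1 (X (-2) x) (X (-1) x)"
proof -
  assume n: "2 \<le> n1"
  have "[- int n1 .. -1] = [- int n1 .. -2] @ [-1]" using n by (simp add: upto_rec2)
  also have "[- int n1 .. -2] = [- int n1 .. -3] @ [-2]" using n by (simp add: upto_rec2)
  finally have "[- int n1 .. -1] = [- int n1 .. -3] @ [-2, -1]" by simp
  then show ?thesis unfolding U'_def by (simp add: refs_two)
qed


lemma sum_pi_le: "(\<Sum>j\<le>m. pi_unc p q j) = (if m < 2 then 0 else p*q^2 + p*q^2 * catalan_poly (m-2) (p*q))"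
proof (induction m)
  case 0 then show ?case by (simp add: pi_unc_def)
next
  case (Suc m)
  show ?case
  proof (cases "m < 2")
    case True
    then consider "m = 0" | "m = 1" by linarith
    then show ?thesis
    proof cases
      case 1 then show ?thesis using Suc by (simp add: pi_unc_def)
    next
      case 2 then show ?thesis using Suc
        by (simp add: pi_unc_def catalan_poly_def catalan_def)
    qed
  next
    case False
    define k where "k = m - 2"
    have k: "m = Suc (Suc k)" using False unfolding k_def by simp
    show ?thesis using Suc False unfolding k
      by (simp add: pi_unc_def catalan_poly_def algebra_simps power_mult_distrib)
  qed
qed

context prob_space
begin

lemma ev_sets:
  assumes ind: "indep_vars (\<lambda>_. count_space UNIV) X UNIV"
  shows "{x \<in> space M. X i x = w} \<in> events"
proof -
  have "random_variable (count_space UNIV) (X i)" using ind unfolding indep_vars_def2 by auto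
  then have "X i -` {w} \<inter> space M \<in> events" by (rule measurable_sets) auto
  moreover have "X i -` {w} \<inter> space M = {x \<in> space M. X i x = w}" by auto
  ultimately show ?thesis by simp
qed

lemma indep_pts:
  assumes ind: "indep_vars (\<lambda>_. count_space UNIV) X UNIV"
    and J: "finite J" "J \<noteq> {}"
  shows "prob (\<Inter>j\<in>J. {x \<in> space M. X j x = w j}) = (\<Prod>j\<in>J. prob {x \<in> space M. X j x = w j})"
proof -
  have isd: "indep_sets (\<lambda>i. { X i -` A \<inter> space M | A. A \<in> sets (count_space UNIV)}) UNIV"
    using ind unfolding indep_vars_def2 by auto
  have eq: "\<And>j. {x \<in> space M. X j x = w j} = X j -` {w j} \<inter> space M" by auto
  show ?thesis unfolding eq
    by (rule indep_setsD[OF isd]) (use J in auto)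
qed

end


lemma S1_eq: "(\<Sum>b\<in>{b. attacker_won b \<and> cycle_len b \<le> n1}. cycle_prob p q b) = (\<Sum>i\<le>n1. pi_unc p q i)"
proof -
  have "(\<Sum>b\<in>{b. attacker_won b \<and> cycle_len b \<le> n1}. cycle_prob p q b) =
      (\<Sum>i\<in>{..n1}. \<Sum>b\<in>{b. b \<in> {b. attacker_won b \<and> cycle_len b \<le> n1} \<and> cycle_len b = i}. cycle_prob p q b)"
    by (rule sum.group[symmetric]) (auto simp: finite_won_le)
  also have "\<dots> = (\<Sum>i\<le>n1. pi_unc p q i)"
  proof (rule sum.cong[OF refl])
    fix i assume "i \<in> {..n1}"
    then have "{b. b \<in> {b. attacker_won b \<and> cycle_len b \<le> n1} \<and> cycle_len b = i} = {b. attacker_won b \<and> cycle_len b = i}"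
      by auto
    then show "(\<Sum>b\<in>{b. b \<in> {b. attacker_won b \<and> cycle_len b \<le> n1} \<and> cycle_len b = i}. cycle_prob p q b) = pi_unc p q i"
      using sum_W by simp
  qed
  finally show ?thesis .
qed

lemma S2_eq:
  fixes n1 :: nat
  defines "F2 \<equiv> {(a,b). attacker_won a \<and> attacker_won b \<and> cycle_len a + cycle_len b \<le> n1}"
  shows "finite F2"
    and "(\<Sum>ab\<in>F2. cycle_prob p q (fst ab) * cycle_prob p q (snd ab)) =
       (\<Sum>i\<le>n1. \<Sum>j\<le>n1-i. pi_unc p q i * pi_unc p q j)"
proof -
  have sub: "F2 \<subseteq> {b. attacker_won b \<and> cycle_len b \<le> n1} \<times> {b. attacker_won b \<and> cycle_len b \<le> n1}"
    unfolding F2_def by auto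
  show fin: "finite F2" by (rule finite_subset[OF sub]) (simp add: finite_won_le)
  define T where "T = (SIGMA i:{..n1}. {..n1-i})"
  have finT: "finite T" unfolding T_def by auto
  have "(\<Sum>ab\<in>F2. cycle_prob p q (fst ab) * cycle_prob p q (snd ab)) =
     (\<Sum>ij\<in>T. \<Sum>ab\<in>{ab. ab \<in> F2 \<and> (cycle_len (fst ab), cycle_len (snd ab)) = ij}. cycle_prob p q (fst ab) * cycle_prob p q (snd ab))"
    by (rule sum.group[symmetric, OF fin finT]) (auto simp: F2_def T_def)
  also have "\<dots> = (\<Sum>ij\<in>T. pi_unc p q (fst ij) * pi_unc p q (snd ij))"
  proof (rule sum.cong[OF refl])
    fix ij assume "ij \<in> T"
    then obtain i j where ij: "ij = (i, j)" "i + j \<le> n1" unfolding T_def by auto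
    have "{ab. ab \<in> F2 \<and> (cycle_len (fst ab), cycle_len (snd ab)) = ij} =
        {b. attacker_won b \<and> cycle_len b = i} \<times> {b. attacker_won b \<and> cycle_len b = j}"
      unfolding F2_def ij using ij(2) by auto
    then show "(\<Sum>ab\<in>{ab. ab \<in> F2 \<and> (cycle_len (fst ab), cycle_len (snd ab)) = ij}. cycle_prob p q (fst ab) * cycle_prob p q (snd ab)) =
        pi_unc p q (fst ij) * pi_unc p q (snd ij)"
      by (simp add: ij sum.cartesian_product' sum_product[symmetric] sum_W)
  qed
  also have "\<dots> = (\<Sum>i\<le>n1. \<Sum>j\<le>n1-i. pi_unc p q i * pi_unc p q j)"
    unfolding T_def by (subst sum.Sigma) (auto simp: case_prod_beta)
  finally show "(\<Sum>ab\<in>F2. cycle_prob p q (fst ab) * cycle_prob p q (snd ab)) =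
       (\<Sum>i\<le>n1. \<Sum>j\<le>n1-i. pi_unc p q i * pi_unc p q j)" .
qed

lemma final_alg:
  assumes "2 \<le> n1"
  shows "(\<Sum>i\<le>n1. pi_unc p q i) - (\<Sum>i\<le>n1. \<Sum>j\<le>n1-i. pi_unc p q i * pi_unc p q j) =
    (\<Sum>i=2..n1-2. (1 - p*q^2 - p*q^2 * catalan_poly (n1-2-i) (p*q)) * pi_unc p q i)
           + pi_unc p q (n1-1) + pi_unc p q n1"
proof -
  define f where "f i = pi_unc p q i * (1 - (\<Sum>j\<le>n1-i. pi_unc p q j))" for i
  have "(\<Sum>i\<le>n1. pi_unc p q i) - (\<Sum>i\<le>n1. \<Sum>j\<le>n1-i. pi_unc p q i * pi_unc p q j) = (\<Sum>i\<le>n1. f i)"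
    unfolding f_def by (simp add: sum_subtractf sum_distrib_left algebra_simps)
  also obtain k where k: "n1 = Suc (Suc k)" using assms by (metis add_2_eq_Suc le_Suc_ex)
  have "(\<Sum>i\<le>n1. f i) = (\<Sum>i\<le>k. f i) + f (Suc k) + f (Suc (Suc k))"
    unfolding k by simp
  also have "f (Suc k) = pi_unc p q (n1 - 1)" unfolding f_def k by (simp add: pi_unc_def)
  also have "f (Suc (Suc k)) = pi_unc p q n1" unfolding f_def k by (simp add: pi_unc_def)
  also have "(\<Sum>i\<le>k. f i) = (\<Sum>i=2..k. f i)"
    by (rule sum.mono_neutral_right) (auto simp: f_def pi_unc_def)
  also have "\<dots> = (\<Sum>i=2..n1-2. (1 - p*q^2 - p*q^2 * catalan_poly (n1-2-i) (p*q)) * pi_unc p q i)"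
  proof (rule sum.cong)
    show "{2..k} = {2..n1-2}" using k by simp
  next
    fix i assume i: "i \<in> {2..n1-2}"
    then have "\<not> n1 - i < 2" "n1 - i - 2 = n1 - 2 - i" using k by auto
    then show "f i = (1 - p*q^2 - p*q^2 * catalan_poly (n1-2-i) (p*q)) * pi_unc p q i"
      unfolding f_def sum_pi_le by (simp add: algebra_simps)
  qed
  finally show ?thesis by simp
qed

theorem lemma4:
  fixes M :: "'m measure" and X :: "int \<Rightarrow> 'm \<Rightarrow> letter list"
    and p q :: real and n1 :: nat
  assumes "prob_space M"
    and "p + q = 1" and "0 < q" and "q < p" and "2 \<le> n1"
    and "prob_space.indep_vars M (\<lambda>_. count_space UNIV) X UNIV"
    and "\<And>i w. measure M {x \<in> space M. X i x = w} = cycle_prob p q w"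
  shows "\<P>(x in M. U' n1 X x = 1 \<bar> X 0 x = [H]) =
           (\<Sum>i=2..n1-2. (1 - p*q^2 - p*q^2 * catalan_poly (n1-2-i) (p*q)) * pi_unc p q i)
           + pi_unc p q (n1-1) + pi_unc p q n1 \<and>
         \<P>(x in M. U' n1 X x = 2 \<bar> X 0 x = [H]) =
           (\<Sum>i\<le>n1. \<Sum>j\<le>n1-i. pi_unc p q i * pi_unc p q j) \<and>
         \<P>(x in M. U' n1 X x \<ge> 3 \<bar> X 0 x = [H]) = 0"
proof -
  interpret P: prob_space M by fact
  note ind = assms(6)
  note cpA = assms(7)
  have p0: "0 < p" using assms by linarith
  have cpH: "cycle_prob p q [H] = p" by (simp add: cycle_prob_def)
  define Wle where "Wle = {b. attacker_won b \<and> cycle_len b \<le> n1}"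
  define F2 where "F2 = {(a,b). attacker_won a \<and> attacker_won b \<and> cycle_len a + cycle_len b \<le> n1}"
  have finWle: "finite Wle" unfolding Wle_def by (rule finite_won_le)
  have finF2: "finite F2" unfolding F2_def by (rule S2_eq(1))
  have evs: "\<And>i w. {x \<in> space M. X i x = w} \<in> sets M" by (rule P.ev_sets[OF ind])
  have three: "measure M ({x \<in> space M. X (-2) x = a} \<inter> {x \<in> space M. X (-1) x = b} \<inter> {x \<in> space M. X 0 x = c})
      = cycle_prob p q a * cycle_prob p q b * cycle_prob p q c" for a b c
    using P.indep_pts[OF ind, of "{-2,-1,0}" "\<lambda>j. if j = -2 then a else if j = -1 then b else c"]
    by (simp add: cpA Int_assoc)
  have two: "measure M ({x \<in> space M. X (-1) x = b} \<inter> {x \<in> space M. X 0 x = c})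
      = cycle_prob p q b * cycle_prob p q c" for b c
    using P.indep_pts[OF ind, of "{-1,0}" "\<lambda>j. if j = -1 then b else c"]
    by (simp add: cpA)
  define E2 where "E2 = {x \<in> space M. gg n1 (X (-2) x) (X (-1) x) = 2 \<and> X 0 x = [H]}"
  define E1 where "E1 = {x \<in> space M. X (-1) x \<in> Wle \<and> X 0 x = [H]}"
  have E2_eq: "E2 = (\<Union>ab\<in>F2. {x \<in> space M. X (-2) x = fst ab} \<inter> {x \<in> space M. X (-1) x = snd ab} \<inter> {x \<in> space M. X 0 x = [H]})"
    unfolding E2_def F2_def gg_def by (auto split: if_splits)
  have E1_eq: "E1 = (\<Union>b\<in>Wle. {x \<in> space M. X (-1) x = b} \<inter> {x \<in> space M. X 0 x = [H]})"
    unfolding E1_def by auto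
  have E2s: "E2 \<in> sets M" unfolding E2_eq using finF2 evs by (intro sets.finite_UN) auto
  have E1s: "E1 \<in> sets M" unfolding E1_eq using finWle evs by (intro sets.finite_UN) auto
  have mE2: "measure M E2 = (\<Sum>ab\<in>F2. cycle_prob p q (fst ab) * cycle_prob p q (snd ab)) * p"
    unfolding E2_eq
    by (subst P.finite_measure_finite_Union) (use finF2 evs in \<open>auto simp: disjoint_family_on_def three cpH sum_distrib_right\<close>)
  have mE1: "measure M E1 = (\<Sum>b\<in>Wle. cycle_prob p q b) * p"
    unfolding E1_eq
    by (subst P.finite_measure_finite_Union) (use finWle evs in \<open>auto simp: disjoint_family_on_def two cpH sum_distrib_right\<close>)
  have sub: "E2 \<subseteq> E1" unfolding E1_def E2_def gg_def Wle_def by (auto split: if_splits)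
  have Ueq: "\<And>x. U' n1 X x = gg n1 (X (-2) x) (X (-1) x)" by (rule U'_eq[OF assms(5)])
  have set1: "{x \<in> space M. U' n1 X x = 1 \<and> X 0 x = [H]} = E1 - E2"
    unfolding E1_def E2_def Wle_def Ueq by (auto simp: gg_def split: if_splits)
  have set2: "{x \<in> space M. U' n1 X x = 2 \<and> X 0 x = [H]} = E2"
    unfolding E2_def Ueq by auto
  have set3: "{x \<in> space M. U' n1 X x \<ge> 3 \<and> X 0 x = [H]} = {}"
    unfolding Ueq by (auto simp: gg_def split: if_splits)
  have den: "measure M {x \<in> space M. X 0 x = [H]} = p" using cpA cpH by simp
  have S1: "(\<Sum>b\<in>Wle. cycle_prob p q b) = (\<Sum>i\<le>n1. pi_unc p q i)" unfolding Wle_def by (rule S1_eq)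
  have S2: "(\<Sum>ab\<in>F2. cycle_prob p q (fst ab) * cycle_prob p q (snd ab)) =
       (\<Sum>i\<le>n1. \<Sum>j\<le>n1-i. pi_unc p q i * pi_unc p q j)" unfolding F2_def by (rule S2_eq(2))
  have r1: "\<P>(x in M. U' n1 X x = 1 \<bar> X 0 x = [H]) = (measure M E1 - measure M E2) / p"
    unfolding cond_prob_def set1 den using P.finite_measure_Diff[OF E1s E2s sub] by simp
  have r2: "\<P>(x in M. U' n1 X x = 2 \<bar> X 0 x = [H]) = measure M E2 / p"
    unfolding cond_prob_def set2 den by simp
  have r3: "\<P>(x in M. U' n1 X x \<ge> 3 \<bar> X 0 x = [H]) = 0"
    unfolding cond_prob_def set3 by simp
  show ?thesis
    using r1 r2 r3 mE1 mE2 S1 S2 final_alg[OF assms(5), of p q] p0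
    by (simp add: left_diff_distrib[symmetric])
qed

end
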